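(* Let $F$ be a cumulative distribution function of a nonnegative random variable, let $0<\sigma_1<\sigma_2<\cdots<\sigma_T$ be points (arrivals) on the positive real line, and let $\mathbf p=(p_1,\dots,p_T)\in[0,1]^T$. For every $t\in[T]$, the probability that the unit is available at arrival $\sigma_t$ in the random $(F,\boldsymbol\sigma,\mathbf p)$ process is equal to the fraction of the resource available at arrival $\sigma_t$ in the fluid $(F,\boldsymbol\sigma,\mathbf p)$ process. Consequently, the expected reward $r(F,\boldsymbol\sigma,\mathbf p)$ of the random process equals the total reward of the fluid process.
   Context: Random $(F,\boldsymbol\sigma,\mathbf p)$ process: a single unit of a resource starts at time $0$ in the available state; time moves forward along the real line. If the unit is available just prior to $\sigma_t$, then with probability $p_t$ (independently of everything else) it becomes in-use for a random duration $d$ drawn independently from $F$: it is in use on $(\sigma_t,\sigma_t+d)$ and becomes available again at time $\sigma_t+d$. Each switch from available to in-use earns reward $1$; $r(F,\boldsymbol\sigma,\mathbf p)$ denotes the expected total reward. Fluid $(F,\boldsymbol\sigma,\mathbf p)$ process: a single unit of resource is treated as divisible, with fraction $1$ available at time $0$. If a fraction $\delta_t$ is available when $\sigma_t$ arrives, a fraction $p_t\delta_t$ is consumed at $\sigma_t$, earning reward $p_t\delta_t$; of this consumed amount, exactly a fraction $F(d)$ has returned and is available again by time $\sigma_t+d$, for every $d\ge 0$. *)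

theory Defs
  imports "HOL-Probability.Probability"
begin

text \<open>Arrivals are indexed 0,...,T-1 (the paper uses 1,...,T).
  A sample point w assigns to arrival t a pair (coin, duration):
  the coin is a Bernoulli(p t) variable, the duration is drawn from the
  duration distribution M (whose CDF is F = cdf M).\<close>

text \<open>Random process: time until which the unit is busy just before arrival t
  (0 = initially available). The unit is available at arrival t iff busy \<le> sigma t.\<close>
fun busy_until :: "(nat \<Rightarrow> real) \<Rightarrow> (nat \<Rightarrow> bool \<times> real) \<Rightarrow> nat \<Rightarrow> real" where
  "busy_until \<sigma> w 0 = 0"
| "busy_until \<sigma> w (Suc t) =
     (if busy_until \<sigma> w t \<le> \<sigma> t \<and> fst (w t) then \<sigma> t + snd (w t) else busy_until \<sigma> w t)"

definition available :: "(nat \<Rightarrow> real) \<Rightarrow> (nat \<Rightarrow> bool \<times> real) \<Rightarrow> nat \<Rightarrow> bool" where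
  "available \<sigma> w t \<longleftrightarrow> busy_until \<sigma> w t \<le> \<sigma> t"

definition random_space :: "real measure \<Rightarrow> (nat \<Rightarrow> real) \<Rightarrow> nat \<Rightarrow> (nat \<Rightarrow> bool \<times> real) measure" where
  "random_space M p T = PiM {..<T} (\<lambda>t. measure_pmf (bernoulli_pmf (p t)) \<Otimes>\<^sub>M M)"

definition random_reward :: "(nat \<Rightarrow> real) \<Rightarrow> nat \<Rightarrow> (nat \<Rightarrow> bool \<times> real) \<Rightarrow> real" where
  "random_reward \<sigma> T w = (\<Sum>t<T. if available \<sigma> w t \<and> fst (w t) then 1 else 0)"

text \<open>Fluid process: list of available fractions delta_0, ..., delta_(t-1).\<close>
fun fluid_list :: "(real \<Rightarrow> real) \<Rightarrow> (nat \<Rightarrow> real) \<Rightarrow> (nat \<Rightarrow> real) \<Rightarrow> nat \<Rightarrow> real list" where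
  "fluid_list F \<sigma> p 0 = []"
| "fluid_list F \<sigma> p (Suc t) =
     (let ds = fluid_list F \<sigma> p t
      in ds @ [1 - (\<Sum>s<t. p s * ds ! s * (1 - F (\<sigma> t - \<sigma> s)))])"

definition fluid_avail :: "(real \<Rightarrow> real) \<Rightarrow> (nat \<Rightarrow> real) \<Rightarrow> (nat \<Rightarrow> real) \<Rightarrow> nat \<Rightarrow> real" where
  "fluid_avail F \<sigma> p t = fluid_list F \<sigma> p (Suc t) ! t"

definition fluid_reward :: "(real \<Rightarrow> real) \<Rightarrow> (nat \<Rightarrow> real) \<Rightarrow> (nat \<Rightarrow> real) \<Rightarrow> nat \<Rightarrow> real" where
  "fluid_reward F \<sigma> p T = (\<Sum>t<T. p t * fluid_avail F \<sigma> p t)"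

end

theory Submission
  imports Defs
begin

lemma busy_local:
  "(\<And>s. s < t \<Longrightarrow> w s = w' s) \<Longrightarrow> busy_until \<sigma> w t = busy_until \<sigma> w' t"
  by (induction t) auto

lemma fluid_list_length: "length (fluid_list F \<sigma> p t) = t"
  by (induction t) (auto simp: Let_def)

lemma fluid_list_nth: "s < t \<Longrightarrow> fluid_list F \<sigma> p t ! s = fluid_avail F \<sigma> p s"
proof (induction t)
  case 0 then show ?case by simp
next
  case (Suc t)
  show ?case
  proof (cases "s = t")
    case True then show ?thesis by (simp add: fluid_avail_def)
  next
    case False
    with Suc have "s < t" by simp
    then show ?thesis using Suc.IH by (simp add: Let_def nth_append fluid_list_length)
  qed
qed

lemma fluid_avail_rec: "fluid_avail F \<sigma> p t = 1 - (\<Sum>s<t. p s * fluid_avail F \<sigma> p s * (1 - F (\<sigma> t - \<sigma> s)))"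
  by (simp add: fluid_avail_def Let_def nth_append fluid_list_length fluid_list_nth)

lemma busy_meas:
  assumes "sets M = sets borel" "{..<t} \<subseteq> J"
  shows "(\<lambda>w. busy_until \<sigma> w t) \<in> borel_measurable (PiM J (\<lambda>i. measure_pmf (bernoulli_pmf (p i)) \<Otimes>\<^sub>M M))"
  using assms(2)
proof (induction t)
  case 0 then show ?case by simp
next
  case (Suc t)
  define N where "N = (\<lambda>i. measure_pmf (bernoulli_pmf (p i)) \<Otimes>\<^sub>M M)"
  have tJ: "t \<in> J" using Suc.prems by auto
  have "{..<t} \<subseteq> J" using Suc.prems by auto
  then have IH: "(\<lambda>w. busy_until \<sigma> w t) \<in> borel_measurable (PiM J N)" using Suc.IH unfolding N_def by blast
  have c: "(\<lambda>w. w t) \<in> measurable (PiM J N) (measure_pmf (bernoulli_pmf (p t)) \<Otimes>\<^sub>M M)"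
    using measurable_component_singleton[OF tJ, of N] by (simp add: N_def)
  have f: "(\<lambda>w. fst (w t)) \<in> measurable (PiM J N) (count_space UNIV)"
    using measurable_fst'[OF c] by (simp add: measurable_cong_sets)
  have s: "(\<lambda>w. snd (w t)) \<in> borel_measurable (PiM J N)"
    using measurable_snd'[OF c] assms(1) by (simp cong: measurable_cong_sets)
  have "(\<lambda>w. busy_until \<sigma> w (Suc t)) \<in> borel_measurable (PiM J N)" using IH f s by simp measurable
  then show ?case unfolding N_def .
qed

lemma prob_N: "real_distribution M \<Longrightarrow> prob_space (measure_pmf (bernoulli_pmf (p i)) \<Otimes>\<^sub>M M)"
  by (intro prob_space_pair prob_space_measure_pmf) (simp add: real_distribution_def)

lemma indep_coords:
  fixes M :: "real measure" and p :: "nat \<Rightarrow> real" and T :: nat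
  defines "N \<equiv> (\<lambda>i. measure_pmf (bernoulli_pmf (p i)) \<Otimes>\<^sub>M M)"
  defines "N' \<equiv> (\<lambda>i. if i < T then N i else count_space UNIV)"
  assumes M: "real_distribution M" and T: "0 < T"
  shows "prob_space.indep_vars (PiM {..<T} N) N' (\<lambda>i w. w i) {..<T}"
proof -
  have pN: "prob_space (N i)" for i unfolding N_def using prob_N[OF M] .
  interpret P: prob_space "PiM {..<T} N" by (rule prob_space_PiM) (rule pN)
  have rv: "(\<lambda>w. w i) \<in> measurable (PiM {..<T} N) (N' i)" for i
  proof (cases "i < T")
    case True
    have "(\<lambda>w. w i) \<in> measurable (PiM {..<T} N) (N i)"
      by (rule measurable_component_singleton) (use True in simp)
    then show ?thesis using True by (simp add: N'_def)
  next
    case False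
    have "(\<lambda>w. undefined) \<in> measurable (PiM {..<T} N) (count_space UNIV)" by simp
    moreover have "\<And>w. w \<in> space (PiM {..<T} N) \<Longrightarrow> undefined = w i"
      using False by (auto simp: space_PiM PiE_def extensional_def)
    ultimately have "(\<lambda>w. w i) \<in> measurable (PiM {..<T} N) (count_space UNIV)"
      by (rule measurable_cong[THEN iffD1, rotated])
    then show ?thesis using False by (simp add: N'_def)
  qed
  have PN: "PiM {..<T} N' = PiM {..<T} N" by (rule PiM_cong) (auto simp: N'_def)
  have lhs: "distr (PiM {..<T} N) (PiM {..<T} N') (\<lambda>x. \<lambda>i\<in>{..<T}. x i) = PiM {..<T} N"
  proof -
    have "distr (PiM {..<T} N) (PiM {..<T} N) (\<lambda>x. \<lambda>i\<in>{..<T}. x i) = distr (PiM {..<T} N) (PiM {..<T} N) (\<lambda>x. x)"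
      by (rule distr_cong) (auto simp: space_PiM PiE_def extensional_def restrict_def fun_eq_iff)
    then show ?thesis by (simp add: PN)
  qed
  have rhs: "PiM {..<T} (\<lambda>i. distr (PiM {..<T} N) (N' i) (\<lambda>w. w i)) = PiM {..<T} N"
    by (rule PiM_cong) (auto simp: N'_def intro!: distr_PiM_component pN)
  show ?thesis
    by (subst P.indep_vars_iff_distr_eq_PiM) (use T rv lhs rhs in auto)
qed

lemma key:
  fixes M :: "real measure" and p :: "nat \<Rightarrow> real" and T :: nat and \<sigma> :: "nat \<Rightarrow> real"
  defines "N \<equiv> (\<lambda>i. measure_pmf (bernoulli_pmf (p i)) \<Otimes>\<^sub>M M)"
  assumes M: "real_distribution M" and sT: "s < T" and C: "C \<in> sets (N s)"
  shows "measure (PiM {..<T} N) {w \<in> space (PiM {..<T} N). available \<sigma> w s \<and> w s \<in> C}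
       = measure (PiM {..<T} N) {w \<in> space (PiM {..<T} N). available \<sigma> w s} * measure (N s) C"
proof -
  define N' where "N' \<equiv> (\<lambda>i. if i < T then N i else count_space UNIV)"
  have pN: "prob_space (N i)" for i unfolding N_def using prob_N[OF M] .
  interpret P: prob_space "PiM {..<T} N" by (rule prob_space_PiM) (rule pN)
  have ind: "P.indep_vars N' (\<lambda>i w. w i) {..<T}"
    unfolding N'_def N_def by (rule indep_coords[OF M]) (use sT in simp)
  have iv: "P.indep_var (PiM {..<s} N') (\<lambda>w. restrict (\<lambda>i. w i) {..<s}) (PiM {s} N') (\<lambda>w. restrict (\<lambda>i. w i) {s})"
    by (rule P.indep_var_restrict[OF ind]) (use sT in auto)
  have e1: "PiM {..<s} N' = PiM {..<s} N" by (rule PiM_cong) (use sT in \<open>auto simp: N'_def\<close>)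
  have e2: "PiM {s} N' = PiM {s} N" by (rule PiM_cong) (use sT in \<open>auto simp: N'_def\<close>)
  have Y1: "(\<lambda>r. busy_until \<sigma> r s) \<in> borel_measurable (PiM {..<s} N)"
    unfolding N_def by (rule busy_meas) (use M in \<open>auto simp: real_distribution_def real_distribution_axioms_def\<close>)
  have Y2: "(\<lambda>r. r s) \<in> measurable (PiM {s} N) (N s)"
    by (rule measurable_component_singleton) simp
  have MB: "sets M = sets borel" using M by (simp add: real_distribution_def real_distribution_axioms_def)
  have Y1': "(\<lambda>r. (True, busy_until \<sigma> r s)) \<in> measurable (PiM {..<s} N) (N s)"
    unfolding N_def by (rule measurable_Pair) (use Y1[unfolded N_def] MB in \<open>auto cong: measurable_cong_sets\<close>)
  have iv2: "P.indep_var (N s) ((\<lambda>r. (True, busy_until \<sigma> r s)) \<circ> (\<lambda>w. restrict (\<lambda>i. w i) {..<s})) (N s) ((\<lambda>r. r s) \<circ> (\<lambda>w. restrict (\<lambda>i. w i) {s}))"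
    by (rule P.indep_var_compose[OF iv[unfolded e1 e2] Y1' Y2])
  have "UNIV \<times> {..\<sigma> s} \<in> sets (N s)" using MB unfolding N_def by simp
  note D = P.indep_varD[OF iv2 this C]
  have b: "busy_until \<sigma> (restrict w {..<s}) s = busy_until \<sigma> w s" for w
    by (rule busy_local) simp
  have s1: "(\<lambda>x. (((\<lambda>r. (True, busy_until \<sigma> r s)) \<circ> (\<lambda>w. restrict (\<lambda>i. w i) {..<s})) x, ((\<lambda>r. r s) \<circ> (\<lambda>w. restrict (\<lambda>i. w i) {s})) x)) -` ((UNIV \<times> {..\<sigma> s}) \<times> C) \<inter> space (PiM {..<T} N)
     = {w \<in> space (PiM {..<T} N). available \<sigma> w s \<and> w s \<in> C}"
    by (auto simp: b available_def)
  have s2: "((\<lambda>r. (True, busy_until \<sigma> r s)) \<circ> (\<lambda>w. restrict (\<lambda>i. w i) {..<s})) -` (UNIV \<times> {..\<sigma> s}) \<inter> space (PiM {..<T} N)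
     = {w \<in> space (PiM {..<T} N). available \<sigma> w s}"
    by (auto simp: b available_def)
  have s3: "((\<lambda>r. r s) \<circ> (\<lambda>w. restrict (\<lambda>i. w i) {s})) -` C \<inter> space (PiM {..<T} N)
     = (\<lambda>w. w s) -` C \<inter> space (PiM {..<T} N)"
    by auto
  have "measure (PiM {..<T} N) ((\<lambda>w. w s) -` C \<inter> space (PiM {..<T} N)) = measure (distr (PiM {..<T} N) (N s) (\<lambda>w. w s)) C"
    by (rule measure_distr[symmetric]) (use C sT in \<open>auto intro!: measurable_component_singleton\<close>)
  also have "distr (PiM {..<T} N) (N s) (\<lambda>w. w s) = N s"
    by (rule distr_PiM_component) (use sT pN in auto)
  finally have s4: "measure (PiM {..<T} N) ((\<lambda>w. w s) -` C \<inter> space (PiM {..<T} N)) = measure (N s) C" .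
  show ?thesis using D unfolding s1 s2 s3 s4 .
qed

lemma rect:
  fixes M :: "real measure"
  assumes M: "real_distribution M" and q: "0 \<le> q" "q \<le> 1" and x: "True"
  shows "measure (measure_pmf (bernoulli_pmf q) \<Otimes>\<^sub>M M) ({True} \<times> {x<..}) = q * (1 - cdf M x)"
    and "measure (measure_pmf (bernoulli_pmf q) \<Otimes>\<^sub>M M) ({True} \<times> UNIV) = q"
proof -
  interpret real_distribution M by (rule M)
  have sp: "space M = UNIV" using events_eq_borel sets_eq_imp_space_eq by fastforce
  have c: "measure M {x<..} = 1 - cdf M x"
  proof -
    have "{x<..} = space M - {..x}" using sp by auto
    then have "measure M {x<..} = 1 - measure M {..x}" using prob_compl[of "{..x}"] by simp
    then show ?thesis by (simp add: cdf_def)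
  qed
  have e: "emeasure (measure_pmf (bernoulli_pmf q) \<Otimes>\<^sub>M M) ({True} \<times> B) = ennreal q * emeasure M B" if "B \<in> sets M" for B
    using that q by (simp add: emeasure_pair_measure_Times emeasure_pmf_single)
  show "measure (measure_pmf (bernoulli_pmf q) \<Otimes>\<^sub>M M) ({True} \<times> {x<..}) = q * (1 - cdf M x)"
    unfolding measure_def using e[of "{x<..}"] q c measure_nonneg[of M "{x<..}"]
    by (simp add: emeasure_eq_measure enn2real_mult measure_nonneg)
  show "measure (measure_pmf (bernoulli_pmf q) \<Otimes>\<^sub>M M) ({True} \<times> UNIV) = q"
    unfolding measure_def using e[of "UNIV"] q sp prob_space
    by (simp add: emeasure_eq_measure enn2real_mult measure_nonneg)
qed

lemma tail:
  fixes M :: "real measure" and p :: "nat \<Rightarrow> real" and T :: nat and \<sigma> :: "nat \<Rightarrow> real"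
  defines "N \<equiv> (\<lambda>i. measure_pmf (bernoulli_pmf (p i)) \<Otimes>\<^sub>M M)"
  defines "P \<equiv> PiM {..<T} N"
  assumes M: "real_distribution M" and p01: "\<forall>t<T. 0 \<le> p t \<and> p t \<le> 1"
  shows "t \<le> T \<Longrightarrow> 0 \<le> u \<Longrightarrow> (\<forall>s<t. \<sigma> s \<le> u) \<Longrightarrow>
    measure P {w\<in>space P. u < busy_until \<sigma> w t}
    = (\<Sum>s<t. measure P {w\<in>space P. available \<sigma> w s} * (p s * (1 - cdf M (u - \<sigma> s))))"
proof (induction t)
  case 0
  then show ?case by simp
next
  case (Suc t)
  have MB: "sets M = sets borel" using M by (simp add: real_distribution_def real_distribution_axioms_def)
  have pN: "prob_space (N i)" for i unfolding N_def using prob_N[OF M] .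
  interpret P: prob_space P unfolding P_def by (rule prob_space_PiM) (rule pN)
  have tT: "t < T" and su: "\<sigma> t \<le> u" using Suc.prems by auto
  have bm: "(\<lambda>w. busy_until \<sigma> w t') \<in> borel_measurable P" if "t' \<le> T" for t'
    unfolding P_def N_def by (rule busy_meas[OF MB]) (use that in auto)
  define C where "C = {True} \<times> {u - \<sigma> t<..}"
  have C: "C \<in> sets (N t)" unfolding C_def N_def using MB by simp
  define E1 where "E1 = {w\<in>space P. available \<sigma> w t \<and> w t \<in> C}"
  define E2 where "E2 = {w\<in>space P. u < busy_until \<sigma> w t}"
  have E1s: "E1 \<in> sets P"
  proof -
    have "E1 = ((\<lambda>w. busy_until \<sigma> w t) -` {..\<sigma> t} \<inter> space P) \<inter> ((\<lambda>w. w t) -` C \<inter> space P)"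
      by (auto simp: E1_def available_def)
    moreover have "(\<lambda>w. w t) \<in> measurable P (N t)"
      unfolding P_def by (rule measurable_component_singleton) (use tT in simp)
    ultimately show ?thesis using bm[of t] tT C by (auto intro!: measurable_sets)
  qed
  have E2s: "E2 \<in> sets P"
  proof -
    have "E2 = (\<lambda>w. busy_until \<sigma> w t) -` {u<..} \<inter> space P" by (auto simp: E2_def)
    then show ?thesis using bm[of t] tT by (auto intro!: measurable_sets)
  qed
  have eq: "{w\<in>space P. u < busy_until \<sigma> w (Suc t)} = E1 \<union> E2"
    using su by (auto simp: E1_def E2_def C_def available_def mem_Times_iff)
  have dj: "E1 \<inter> E2 = {}" using su by (auto simp: E1_def E2_def available_def)
  have m1: "measure P E1 = measure P {w\<in>space P. available \<sigma> w t} * (p t * (1 - cdf M (u - \<sigma> t)))"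
  proof -
    have "measure P E1 = measure P {w\<in>space P. available \<sigma> w t} * measure (N t) C"
      unfolding E1_def P_def N_def by (rule key[where p=p, OF M tT C[unfolded N_def]])
    moreover have "measure (N t) C = p t * (1 - cdf M (u - \<sigma> t))"
      unfolding N_def C_def using rect(1)[OF M] p01 tT by simp
    ultimately show ?thesis by simp
  qed
  have "measure P {w\<in>space P. u < busy_until \<sigma> w (Suc t)} = measure P E1 + measure P E2"
    unfolding eq by (rule P.finite_measure_Union[OF E1s E2s dj])
  also have "measure P E2 = (\<Sum>s<t. measure P {w\<in>space P. available \<sigma> w s} * (p s * (1 - cdf M (u - \<sigma> s))))"
    unfolding E2_def by (rule Suc.IH) (use Suc.prems in auto)
  finally show ?case using m1 by simp
qed

lemma avail_sets:
  fixes M :: "real measure" and p :: "nat \<Rightarrow> real" and T :: nat and \<sigma> :: "nat \<Rightarrow> real"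
  defines "N \<equiv> (\<lambda>i. measure_pmf (bernoulli_pmf (p i)) \<Otimes>\<^sub>M M)"
  assumes M: "real_distribution M" and tT: "t < T" and C: "C \<in> sets (N t)"
  shows "{w\<in>space (PiM {..<T} N). available \<sigma> w t \<and> w t \<in> C} \<in> sets (PiM {..<T} N)"
proof -
  have MB: "sets M = sets borel" using M by (simp add: real_distribution_def real_distribution_axioms_def)
  have bm: "(\<lambda>w. busy_until \<sigma> w t) \<in> borel_measurable (PiM {..<T} N)"
    unfolding N_def by (rule busy_meas[OF MB]) (use tT in auto)
  have "{w\<in>space (PiM {..<T} N). available \<sigma> w t \<and> w t \<in> C} = ((\<lambda>w. busy_until \<sigma> w t) -` {..\<sigma> t} \<inter> space (PiM {..<T} N)) \<inter> ((\<lambda>w. w t) -` C \<inter> space (PiM {..<T} N))"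
    by (auto simp: available_def)
  moreover have "(\<lambda>w. w t) \<in> measurable (PiM {..<T} N) (N t)"
    by (rule measurable_component_singleton) (use tT in simp)
  ultimately show ?thesis using bm tT C by (auto intro!: measurable_sets)
qed

theorem lemma1:
  fixes M :: "real measure" and \<sigma> :: "nat \<Rightarrow> real" and p :: "nat \<Rightarrow> real" and T :: nat
  assumes "real_distribution M"
    and "AE x in M. 0 \<le> x"
    and "\<forall>t<T. 0 < \<sigma> t"
    and "\<forall>s t. s < t \<and> t < T \<longrightarrow> \<sigma> s < \<sigma> t"
    and "\<forall>t<T. 0 \<le> p t \<and> p t \<le> 1"
  shows "(\<forall>t<T. measure (random_space M p T) {w \<in> space (random_space M p T). available \<sigma> w t}
                 = fluid_avail (cdf M) \<sigma> p t)
       \<and> integral\<^sup>L (random_space M p T) (random_reward \<sigma> T) = fluid_reward (cdf M) \<sigma> p T"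
proof -
  note M = assms(1)
  have MB: "sets M = sets borel" using M by (simp add: real_distribution_def real_distribution_axioms_def)
  define N where "N \<equiv> (\<lambda>i. measure_pmf (bernoulli_pmf (p i)) \<Otimes>\<^sub>M M)"
  define P where "P \<equiv> PiM {..<T} N"
  have RS: "random_space M p T = P" unfolding P_def N_def random_space_def ..
  have pN: "prob_space (N i)" for i unfolding N_def using prob_N[OF M] .
  interpret P: prob_space P unfolding P_def by (rule prob_space_PiM) (rule pN)
  have As: "{w\<in>space P. available \<sigma> w t} \<in> sets P" if "t < T" for t
  proof -
    have "{w\<in>space P. available \<sigma> w t \<and> w t \<in> space (N t)} \<in> sets P"
      unfolding P_def N_def by (rule avail_sets[OF M that]) simp
    moreover have "{w\<in>space P. available \<sigma> w t \<and> w t \<in> space (N t)} = {w\<in>space P. available \<sigma> w t}"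
      using that by (auto simp: P_def space_PiM)
    ultimately show ?thesis by simp
  qed
  have A: "measure P {w\<in>space P. available \<sigma> w t} = fluid_avail (cdf M) \<sigma> p t" if "t < T" for t
    using that
  proof (induction t rule: less_induct)
    case (less t)
    have "measure P {w\<in>space P. \<sigma> t < busy_until \<sigma> w t}
        = (\<Sum>s<t. measure P {w\<in>space P. available \<sigma> w s} * (p s * (1 - cdf M (\<sigma> t - \<sigma> s))))"
      unfolding P_def N_def
      by (rule tail[OF M assms(5)]) (use less.prems assms(3,4) in \<open>auto intro: less_imp_le\<close>)
    also have "\<dots> = (\<Sum>s<t. p s * fluid_avail (cdf M) \<sigma> p s * (1 - cdf M (\<sigma> t - \<sigma> s)))"
      by (rule sum.cong) (use less in auto)
    finally have "measure P {w\<in>space P. \<sigma> t < busy_until \<sigma> w t} = 1 - fluid_avail (cdf M) \<sigma> p t"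
      by (simp add: fluid_avail_rec[of _ _ _ t])
    moreover have "{w\<in>space P. available \<sigma> w t} = space P - {w\<in>space P. \<sigma> t < busy_until \<sigma> w t}"
      by (auto simp: available_def)
    moreover have "{w\<in>space P. \<sigma> t < busy_until \<sigma> w t} \<in> sets P"
    proof -
      have "{w\<in>space P. \<sigma> t < busy_until \<sigma> w t} = space P - {w\<in>space P. available \<sigma> w t}"
        by (auto simp: available_def)
      then show ?thesis using sets.Diff[OF sets.top As[OF less.prems]] by simp
    qed
    ultimately show ?case by (simp add: P.prob_compl)
  qed
  define E where "E t = {w\<in>space P. available \<sigma> w t \<and> w t \<in> {True} \<times> UNIV}" for t
  have Es: "E t \<in> sets P" if "t < T" for t
    unfolding E_def P_def N_def by (rule avail_sets[OF M that]) (use MB in simp)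
  have mE: "measure P (E t) = p t * fluid_avail (cdf M) \<sigma> p t" if "t < T" for t
  proof -
    have "measure P (E t) = measure P {w\<in>space P. available \<sigma> w t} * measure (N t) ({True} \<times> UNIV)"
      unfolding E_def P_def N_def by (rule key[where p=p, OF M that]) (use MB in simp)
    then show ?thesis using A[OF that] rect(2)[OF M, of "p t"] assms(5) that by (simp add: N_def)
  qed
  have "integral\<^sup>L P (random_reward \<sigma> T) = integral\<^sup>L P (\<lambda>w. \<Sum>t<T. indicator (E t) w)"
    unfolding random_reward_def
    by (intro Bochner_Integration.integral_cong refl sum.cong) (auto simp: E_def indicator_def mem_Times_iff)
  also have "\<dots> = (\<Sum>t<T. integral\<^sup>L P (indicator (E t)))"
    by (rule Bochner_Integration.integral_sum) (use Es in \<open>auto intro!: integrable_indicator simp: P.emeasure_eq_measure\<close>)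
  also have "\<dots> = (\<Sum>t<T. p t * fluid_avail (cdf M) \<sigma> p t)"
    by (rule sum.cong) (use Es mE in \<open>auto simp: P.emeasure_eq_measure\<close>)
  finally show ?thesis using A unfolding RS fluid_reward_def by simp
qed

end
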